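(* For every integer $0\le t<(q+1)/d$, the number $l(t,0)$ of polynomials $L\in\mathbb F_{q^2}[X]$ with $\deg L=t$, $\tilde L=L$ and $\gcd(L,X^{(q+1)/d}-1)=1$ equals $$l(t,0)=(q^2-1)\sum_{i=0}^{t-1}(-1)^i\binom{(q+1)/d}{i}q^{t-i-1}+(-1)^t(q-1)\binom{(q+1)/d}{t}.$$
   Context: $q$ is a prime power and $d$ is a positive divisor of $q+1$. For $a\in\mathbb F_{q^2}$, $\bar a=a^q$; for $f(X)=\sum_{i=0}^n a_iX^i\in\mathbb F_{q^2}[X]$ with $a_n\neq0$, $\tilde f(X)=\sum_{i=0}^n\bar a_iX^{n-i}$. *)

theory Defs
  imports "HOL-Computational_Algebra.Computational_Algebra"
begin

definition conjq :: "nat \<Rightarrow> 'a::field \<Rightarrow> 'a" where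
  "conjq q a = a ^ q"

definition tilde :: "nat \<Rightarrow> 'a::field poly \<Rightarrow> 'a poly" where
  "tilde q f = (\<Sum>i\<le>degree f. monom (conjq q (coeff f i)) (degree f - i))"

end

theory Submission
  imports Defs "HOL-Number_Theory.Residues"
begin
hide_const (open) up_ring.monom up_ring.coeff module.smult


lemma fin_pow_card:
  fixes x :: "'a::{finite,field}"
  shows "x ^ card (UNIV :: 'a set) = x"
proof (cases "x = 0")
  case False
  have "x * (\<Prod>y\<in>UNIV-{0}. x * y) = x * x ^ (card (UNIV :: 'a set) - 1) * \<Prod>(UNIV-{0})"
    by (simp add: prod.distrib mult_ac)
  also have "x * x ^ (card (UNIV :: 'a set) - 1) = x ^ Suc (card (UNIV :: 'a set) - 1)"
    by (subst power_Suc) auto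
  also have "Suc (card (UNIV :: 'a set) - 1) = card (UNIV :: 'a set)"
    using finite_UNIV_card_ge_0[where ?'a = 'a] by simp
  also have "(\<Prod>y\<in>UNIV-{0}. x * y) = (\<Prod>y\<in>UNIV-{0}. y)"
    by (rule prod.reindex_bij_witness[of _ "\<lambda>y. y / x" "\<lambda>y. x * y"]) (use False in auto)
  finally show ?thesis
    by simp
qed (use finite_UNIV_card_ge_0[where ?'a = 'a] in auto)

lemma fiber_lemma:
  assumes "finite A" "finite B" "f ` A \<subseteq> B" "card B \<le> n"
    "\<And>b. b \<in> B \<Longrightarrow> card {a\<in>A. f a = b} \<le> k" "card A = n * k" "k > 0"
  shows "card B = n" "\<And>b. b \<in> B \<Longrightarrow> card {a\<in>A. f a = b} = k"
proof -
  have A: "A = (\<Union>b\<in>B. {a\<in>A. f a = b})" using assms(3) by auto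
  have cA: "card A = (\<Sum>b\<in>B. card {a\<in>A. f a = b})"
    by (subst A, rule card_UN_disjoint) (use assms in auto)
  have le: "(\<Sum>b\<in>B. card {a\<in>A. f a = b}) \<le> (\<Sum>b\<in>B. k)"
    by (rule sum_mono) (use assms in auto)
  hence "n * k \<le> card B * k" using cA assms by simp
  thus "card B = n" using assms(4,7) by (meson le_antisym mult_le_cancel2)
  fix b assume b: "b \<in> B"
  show "card {a\<in>A. f a = b} = k"
  proof (rule ccontr)
    assume "card {a\<in>A. f a = b} \<noteq> k"
    hence "card {a\<in>A. f a = b} < k" using assms(5)[OF b] by simp
    hence "(\<Sum>b\<in>B. card {a\<in>A. f a = b}) < (\<Sum>b\<in>B. k)"
      by (intro sum_strict_mono_ex1) (use assms b in auto)
    hence "n * k < card B * k" using cA assms by simp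
    thus False using assms(4) by (meson mult_le_cancel2 not_le)
  qed
qed

lemma roots_pow_bound:
  fixes c :: "'a::field"
  assumes "n > 0"
  shows "card {x. x ^ n = c} \<le> n"
proof -
  define P where "P = monom 1 n - [:c:]"
  have d: "degree P = n" unfolding P_def using assms
    by (simp add: diff_conv_add_uminus degree_add_eq_left degree_monom_eq)
  have "P \<noteq> 0" using d assms by auto
  moreover have "{x. x ^ n = c} = {x. poly P x = 0}" unfolding P_def by (auto simp: poly_monom)
  ultimately show ?thesis using card_poly_roots_bound[of P] d by simp
qed

lemma prod_lin_dvd:
  fixes f :: "'a::field poly"
  assumes "finite A" "\<And>a. a \<in> A \<Longrightarrow> poly f a = 0"
  shows "(\<Prod>a\<in>A. [:-a,1:]) dvd f"
  using assms
proof (induction A arbitrary: f rule: finite_induct)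
  case empty thus ?case by simp
next
  case (insert x A)
  have "[:-x,1:] dvd f" using insert.prems by (simp add: poly_eq_0_iff_dvd)
  then obtain g where f: "f = [:-x,1:] * g" by (elim dvdE)
  have "poly g a = 0" if "a \<in> A" for a
  proof -
    have "poly f a = 0" using insert.prems that by simp
    moreover have "a \<noteq> x" using that insert.hyps by auto
    ultimately show ?thesis using f by simp
  qed
  hence "(\<Prod>a\<in>A. [:-a,1:]) dvd g" using insert.IH by blast
  thus ?case unfolding f prod.insert[OF insert.hyps] by (rule mult_dvd_mono[OF dvd_refl])
qed

definition FF :: "(nat \<Rightarrow> int) \<Rightarrow> nat \<Rightarrow> nat \<Rightarrow> int" where
  "FF s t r = (\<Sum>i\<le>t. (-1)^i * int (r choose i) * s (t - i))"

lemma FF_0: "FF s t 0 = s t"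
  unfolding FF_def by (simp add: sum.atMost_shift)

lemma FF_t0: "FF s 0 r = s 0"
  unfolding FF_def by simp

lemma FF_step: "FF s (Suc t) (Suc r) = FF s (Suc t) r - FF s t r"
proof -
  have "FF s (Suc t) (Suc r) = s (Suc t) + (\<Sum>i\<le>t. (-1)^(Suc i) * int (Suc r choose Suc i) * s (t - i))"
    unfolding FF_def by (subst sum.atMost_Suc_shift) simp
  also have "\<dots> = s (Suc t) + (\<Sum>i\<le>t. (-1)^(Suc i) * int (r choose Suc i) * s (t - i))
       + (\<Sum>i\<le>t. (-1)^(Suc i) * int (r choose i) * s (t - i))"
    by (simp add: sum.distrib[symmetric] algebra_simps)
  also have "s (Suc t) + (\<Sum>i\<le>t. (-1)^(Suc i) * int (r choose Suc i) * s (t - i)) = FF s (Suc t) r"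
    unfolding FF_def by (subst sum.atMost_Suc_shift) simp
  also have "(\<Sum>i\<le>t. (-1)^(Suc i) * int (r choose i) * s (t - i)) = - FF s t r"
    unfolding FF_def by (simp add: sum_negf[symmetric])
  finally show ?thesis by simp
qed

locale ffq =
  fixes q :: nat and k :: nat and ty :: "'a::{finite,field_gcd} itself"
  assumes charq: "q = CHAR('a) ^ k" and kpos: "k > 0"
    and cardq: "card (UNIV :: 'a set) = q^2"
begin

lemma primeC: "prime CHAR('a)"
  using prime_CHAR_semidom[where ?'a='a] finite_imp_CHAR_pos[where ?'a='a] by simp

lemma q_ge2: "q \<ge> 2"
proof -
  have "CHAR('a) \<ge> 2" using primeC prime_ge_2_nat by blast
  hence "CHAR('a) ^ k \<ge> 2 ^ k" by (simp add: power_mono)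
  moreover have "(2::nat) ^ k \<ge> 2" using kpos
    by (metis One_nat_def Suc_leI power_increasing power_one_right zero_less_numeral)
  ultimately show ?thesis using charq by linarith
qed

lemma frob_add: "((x::'a) + y) ^ q = x ^ q + y ^ q"
  using freshmans_dream'[OF primeC charq] .

lemma frob_sum: "(sum (f :: _ \<Rightarrow> 'a) A) ^ q = sum (\<lambda>i. f i ^ q) A"
  using freshmans_dream_sum'[OF primeC charq] .

lemma frob_neg: "(-(x::'a)) ^ q = - (x ^ q)"
proof -
  have "x ^ q + (-x) ^ q = 0" using frob_add[of x "-x"] q_ge2 by (simp add: zero_power)
  thus ?thesis by (simp add: add_eq_0_iff)
qed

lemma frob_diff: "((x::'a) - y) ^ q = x ^ q - y ^ q"
  using frob_add[of x "-y"] frob_neg[of y] by simp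

lemma cjcj: "((x::'a) ^ q) ^ q = x"
  using fin_pow_card[of x] cardq by (simp add: power_mult[symmetric] power2_eq_square)

lemma cj_inj: "(x::'a) ^ q = y ^ q \<longleftrightarrow> x = y"
  by (metis cjcj)

lemma cj_0: "(x::'a) ^ q = 0 \<longleftrightarrow> x = 0"
  using q_ge2 by simp

lemma pow_q2m1: "(a::'a) \<noteq> 0 \<Longrightarrow> a ^ (q^2 - 1) = 1"
proof -
  assume a: "a \<noteq> 0"
  have "q^2 \<ge> 1" using q_ge2 by simp
  hence "a * a ^ (q^2 - 1) = a ^ (q^2)" by (metis Suc_diff_le diff_Suc_1 power_Suc)
  also have "\<dots> = a" using fin_pow_card[of a] cardq by simp
  finally show ?thesis using a by simp
qed

lemma fib1:
  shows "card {b::'a. b^(q+1) = 1} = q + 1"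
    "\<And>b. b^(q+1) = (1::'a) \<Longrightarrow> card {a\<in>UNIV-{0}. a^(q-1) = b} = q - 1"
proof -
  have *: "(q+1)*(q-1) = q^2 - 1" using q_ge2 by (simp add: power2_eq_square algebra_simps)
  have img: "(\<lambda>a::'a. a^(q-1)) ` (UNIV-{0}) \<subseteq> {b. b^(q+1) = 1}"
  proof safe
    fix a :: 'a assume "a \<noteq> 0"
    hence "a ^ ((q-1)*(q+1)) = 1" using pow_q2m1 * by (simp add: mult.commute)
    thus "(a^(q-1))^(q+1) = 1" by (metis power_mult)
  qed
  have cA: "card (UNIV - {0::'a}) = (q+1)*(q-1)" using cardq * by (simp add: card_Diff_singleton)
  have fb: "card {a\<in>UNIV-{0}. a^(q-1) = b} \<le> q - 1" for b :: 'a
    by (rule order.trans[OF card_mono roots_pow_bound[of "q-1" b]]) (use q_ge2 in auto)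
  note F = fiber_lemma[OF _ _ img roots_pow_bound[of "q+1" 1] fb cA]
  show "card {b::'a. b^(q+1) = 1} = q + 1" using F q_ge2 by auto
  show "\<And>b. b^(q+1) = (1::'a) \<Longrightarrow> card {a\<in>UNIV-{0}. a^(q-1) = b} = q - 1"
    using F q_ge2 by auto
qed

lemma fix_card: "card {c::'a. c^q = c} = q"
proof -
  have e: "x^q = x * x^(q-1)" for x :: 'a
    using q_ge2 by (metis Suc_diff_le diff_Suc_1 le_trans one_le_numeral power_Suc)
  have "{c::'a. c^q = c} = insert 0 {a\<in>UNIV-{0}. a^(q-1) = 1}"
    using q_ge2 by (auto simp: e)
  moreover have "card (insert 0 {a\<in>UNIV-{0::'a}. a^(q-1) = 1}) = q"
    using fib1(2)[of 1] q_ge2 by simp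
  ultimately show ?thesis by simp
qed

lemma ex_root: "b^(q+1) = (1::'a) \<Longrightarrow> \<exists>c. c \<noteq> 0 \<and> c^(q-1) = b"
proof -
  assume "b^(q+1) = 1"
  hence "card {a\<in>UNIV-{0}. a^(q-1) = b} = q - 1" by (rule fib1(2))
  hence "card {a\<in>UNIV-{0}. a^(q-1) = b} > 0" using q_ge2 by simp
  hence "{a\<in>UNIV-{0}. a^(q-1) = b} \<noteq> {}" by (metis card.empty less_irrefl)
  thus ?thesis by auto
qed

lemma mu_card:
  assumes "m * d = q + 1" "m > 0"
  shows "card {z::'a. z^m = 1} = m"
proof -
  have dpos: "d > 0" using assms by (cases d) auto
  have img: "(\<lambda>u::'a. u^m) ` {b. b^(q+1) = 1} \<subseteq> {w. w^d = 1}"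
    using assms(1) by (auto simp: power_mult[symmetric])
  have fb: "card {a\<in>{b::'a. b^(q+1) = 1}. a^m = w} \<le> m" for w :: 'a
    by (rule order.trans[OF card_mono roots_pow_bound[of m w]]) (use assms in auto)
  have cA: "card {b::'a. b^(q+1) = 1} = d * m" using fib1(1) assms(1) by (simp add: mult.commute)
  note F = fiber_lemma[OF _ _ img roots_pow_bound[OF dpos, of 1] fb cA assms(2)]
  have "card {a\<in>{b::'a. b^(q+1) = 1}. a^m = 1} = m" using F by auto
  moreover have "{a\<in>{b::'a. b^(q+1) = 1}. a^m = 1} = {z. z^m = 1}"
  proof -
    have "z^(q+1) = 1" if "z^m = (1::'a)" for z
      using that by (metis assms(1) power_mult power_one)
    thus ?thesis by auto
  qed
  ultimately show ?thesis by simp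
qed

lemma coeff_tilde:
  "coeff (tilde q (f::'a poly)) n = (if n > degree f then 0 else (coeff f (degree f - n))^q)"
proof -
  have "coeff (tilde q f) n = (\<Sum>i\<le>degree f. if degree f - i = n then (coeff f i)^q else 0)"
    unfolding tilde_def conjq_def by (simp add: coeff_sum coeff_monom)
  also have "\<dots> = (\<Sum>i\<le>degree f. if i = degree f - n \<and> n \<le> degree f then (coeff f i)^q else 0)"
    by (rule sum.cong) auto
  also have "\<dots> = (if n > degree f then 0 else (coeff f (degree f - n))^q)"
    by (cases "n \<le> degree f") (auto simp: sum.delta)
  finally show ?thesis .
qed

lemma tilde_alt: "tilde q (f::'a poly) = reflect_poly (map_poly (\<lambda>x. x^q) f)"
proof (rule poly_eqI)
  fix n
  have d: "degree (map_poly (\<lambda>x::'a. x^q) f) = degree f"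
    by (rule degree_map_poly) (use q_ge2 in auto)
  show "coeff (tilde q f) n = coeff (reflect_poly (map_poly (\<lambda>x. x^q) f)) n"
    unfolding coeff_tilde coeff_reflect_poly d using q_ge2 by (simp add: coeff_map_poly)
qed

lemma map_cj_mult:
  "map_poly (\<lambda>x::'a. x^q) (f*g) = map_poly (\<lambda>x. x^q) f * map_poly (\<lambda>x. x^q) g"
proof (rule poly_eqI)
  fix n
  show "coeff (map_poly (\<lambda>x::'a. x^q) (f*g)) n = coeff (map_poly (\<lambda>x. x^q) f * map_poly (\<lambda>x. x^q) g) n"
    using q_ge2 by (simp add: coeff_map_poly coeff_mult frob_sum power_mult_distrib)
qed

lemma tilde_mult: "tilde q ((f::'a poly)*g) = tilde q f * tilde q g"
  unfolding tilde_alt map_cj_mult reflect_poly_mult ..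

lemma tilde_lin: "b \<noteq> 0 \<Longrightarrow> tilde q [:a,b::'a:] = [:b^q, a^q:]"
  unfolding tilde_def conjq_def by (simp add: monom_0 monom_Suc)

definition TT :: "nat \<Rightarrow> 'a poly set" where
  "TT t = {L. degree L \<le> t \<and> (\<forall>j\<le>t. coeff L j = (coeff L (t-j))^q)}"

definition SS :: "nat \<Rightarrow> 'a poly set" where
  "SS t = {L. L \<noteq> 0 \<and> degree L = t \<and> tilde q L = L}"

lemma TT_D: "M \<in> TT t \<Longrightarrow> j \<le> t \<Longrightarrow> coeff M j = (coeff M (t-j))^q"
  unfolding TT_def by blast

lemma TT_deg: "M \<in> TT t \<Longrightarrow> degree M \<le> t"
  unfolding TT_def by blast

lemma TT_I: "degree M \<le> t \<Longrightarrow> (\<And>j. j \<le> t \<Longrightarrow> coeff M j = (coeff M (t-j))^q) \<Longrightarrow> M \<in> TT t"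
  unfolding TT_def by blast

lemma S_char: "L \<in> SS t \<longleftrightarrow> L \<in> TT t \<and> coeff L t \<noteq> 0"
proof
  assume L: "L \<in> SS t"
  hence L0: "L \<noteq> 0" and d: "degree L = t" and tl: "tilde q L = L" by (auto simp: SS_def)
  have c: "coeff L j = (coeff L (t-j))^q" if "j \<le> t" for j
  proof -
    have "coeff (tilde q L) j = (coeff L (t-j))^q" using that d by (simp only: coeff_tilde) simp
    thus ?thesis by (simp only: tl)
  qed
  have "coeff L t \<noteq> 0" using L0 d by (metis leading_coeff_0_iff)
  moreover have "L \<in> TT t" unfolding TT_def using d c by blast
  ultimately show "L \<in> TT t \<and> coeff L t \<noteq> 0" by blast
next
  assume L: "L \<in> TT t \<and> coeff L t \<noteq> 0"
  have "degree L \<le> t" using L unfolding TT_def by blast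
  hence d: "degree L = t" using L by (meson antisym le_degree)
  have cL: "\<And>j. j \<le> t \<Longrightarrow> coeff L j = (coeff L (t-j))^q" using L unfolding TT_def by blast
  have "L \<noteq> 0" using L by auto
  moreover have "tilde q L = L"
  proof (rule poly_eqI)
    fix n show "coeff (tilde q L) n = coeff L n"
    proof (cases "n \<le> t")
      case True
      have "coeff (tilde q L) n = (coeff L (t-n))^q" using True d by (simp only: coeff_tilde) simp
      thus ?thesis using cL[OF True] by simp
    next
      case False thus ?thesis using d by (simp add: coeff_tilde coeff_eq_0)
    qed
  qed
  ultimately show "L \<in> SS t" using d by (auto simp: SS_def)
qed

definition gm :: "nat \<Rightarrow> 'a \<times> 'a poly \<Rightarrow> 'a poly" where
  "gm t x = [:(fst x)^q:] + pCons 0 (snd x) + monom (fst x) (t+2)"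

lemma coeff_gm:
  assumes "degree M \<le> t"
  shows "coeff (gm t (a,M)) n = (if n = 0 then a^q else if n = t+2 then a else coeff M (n-1))"
proof -
  have "coeff (gm t (a,M)) n = (if n = 0 then a^q else 0) + (if n = 0 then 0 else coeff M (n-1)) + (if n = t+2 then a else 0)"
    by (cases n) (simp_all add: gm_def coeff_monom)
  moreover have "coeff M (t+1) = 0" using assms by (simp add: coeff_eq_0)
  ultimately show ?thesis by auto
qed

lemma gm_in: "M \<in> TT t \<Longrightarrow> gm t (a,M) \<in> TT (t+2)"
proof -
  assume M: "M \<in> TT t"
  hence dM: "degree M \<le> t" unfolding TT_def by blast
  have "degree (gm t (a,M)) \<le> t+2"
    by (rule degree_le) (use dM in \<open>auto simp: coeff_gm coeff_eq_0\<close>)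
  moreover have "coeff (gm t (a,M)) j = (coeff (gm t (a,M)) (t+2-j))^q" if j: "j \<le> t+2" for j
  proof -
    consider "j = 0" | "j = t+2" | "0 < j" "j < t+2" using j by linarith
    thus ?thesis
    proof cases
      case 3
      have "coeff M (j-1) = (coeff M (t-(j-1)))^q" using TT_D[OF M, of "j-1"] 3 by simp
      moreover have "t-(j-1) = t+2-j-1" using 3 by simp
      ultimately show ?thesis using 3 dM by (auto simp: coeff_gm)
    qed (use dM cjcj in \<open>auto simp: coeff_gm\<close>)
  qed
  ultimately show ?thesis unfolding TT_def by blast
qed

lemma gm_inj: "inj_on (gm t) (UNIV \<times> TT t)"
proof (rule inj_onI, clarify)
  fix a M b N assume M: "M \<in> TT t" and N: "N \<in> TT t" and e: "gm t (a,M) = gm t (b,N)"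
  have dM: "degree M \<le> t" and dN: "degree N \<le> t" using M N by (auto intro: TT_deg)
  have "coeff (gm t (a,M)) (t+2) = coeff (gm t (b,N)) (t+2)" using e by simp
  hence ab: "a = b" using dM dN by (simp add: coeff_gm)
  have "coeff M n = coeff N n" for n
    using arg_cong[OF e, of "\<lambda>p. coeff p (Suc n)"] dM dN
    by (cases "n = t+1") (auto simp: coeff_gm coeff_eq_0)
  thus "a = b \<and> M = N" using ab poly_eqI by blast
qed

lemma gm_surj: "L \<in> TT (t+2) \<Longrightarrow> L = gm t (coeff L (t+2), poly_cutoff (t+1) (poly_shift 1 L)) \<and> poly_cutoff (t+1) (poly_shift 1 L) \<in> TT t"
proof -
  assume L: "L \<in> TT (t+2)"
  define M where "M = poly_cutoff (t+1) (poly_shift 1 L)"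
  have cM: "coeff M j = (if j < t+1 then coeff L (j+1) else 0)" for j
    by (simp add: M_def coeff_poly_cutoff coeff_poly_shift)
  have dM: "degree M \<le> t" by (rule degree_le) (auto simp: cM)
  have dL: "degree L \<le> t+2" using TT_deg[OF L] .
  have cL: "\<And>j. j \<le> t+2 \<Longrightarrow> coeff L j = (coeff L (t+2-j))^q" by (rule TT_D[OF L])
  have "L = gm t (coeff L (t+2), M)"
  proof (rule poly_eqI)
    fix n
    show "coeff L n = coeff (gm t (coeff L (t+2), M)) n"
      using dM dL cL[of 0] by (cases "n \<le> t+2") (auto simp: coeff_gm cM coeff_eq_0)
  qed
  moreover have "M \<in> TT t"
  proof -
    have "coeff M j = (coeff M (t-j))^q" if "j \<le> t" for j
    proof -
      have "coeff L (j+1) = (coeff L (t+2-(j+1)))^q" using cL[of "j+1"] that by simp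
      moreover have "t+2-(j+1) = (t-j)+1" using that by simp
      moreover have "t - j < t + 1" "j < t+1" using that by auto
      ultimately show ?thesis unfolding cM by simp
    qed
    thus ?thesis using dM unfolding TT_def by blast
  qed
  ultimately show ?thesis unfolding M_def[symmetric] by blast
qed

lemma TT_step: "TT (t+2) = gm t ` (UNIV \<times> TT t)"
proof
  show "TT (t+2) \<subseteq> gm t ` (UNIV \<times> TT t)"
  proof
    fix L assume L: "L \<in> TT (t+2)"
    note G = gm_surj[OF L]
    show "L \<in> gm t ` (UNIV \<times> TT t)"
      by (rule rev_image_eqI[of "(coeff L (t+2), poly_cutoff (t+1) (poly_shift 1 L))"]) (use G in simp_all)
  qed
qed (use gm_in in auto)

lemma SS_step: "SS (t+2) = gm t ` ((UNIV - {0}) \<times> TT t)"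
proof -
  have "SS (t+2) = {L\<in>TT (t+2). coeff L (t+2) \<noteq> 0}" using S_char by blast
  also have "\<dots> = gm t ` ((UNIV - {0}) \<times> TT t)"
  proof safe
    fix L assume "L \<in> TT (t+2)" "coeff L (t+2) \<noteq> 0"
    note G = gm_surj[OF \<open>L \<in> TT (t+2)\<close>]
    show "L \<in> gm t ` ((UNIV - {0}) \<times> TT t)"
      by (rule rev_image_eqI[of "(coeff L (t+2), poly_cutoff (t+1) (poly_shift 1 L))"]) (use G \<open>coeff L (t+2) \<noteq> 0\<close> in simp_all)
  next
    fix a :: 'a and M assume "M \<in> TT t" "a \<noteq> 0"
    thus "gm t (a,M) \<in> TT (t+2)" using gm_in by blast
  next
    fix a :: 'a and M assume "M \<in> TT t" "a \<noteq> 0" "coeff (gm t (a, M)) (t+2) = 0"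
    moreover have "degree M \<le> t" using \<open>M \<in> TT t\<close> unfolding TT_def by blast
    ultimately show False by (simp add: coeff_gm)
  qed
  finally show ?thesis .
qed

lemma TT0: "TT 0 = (\<lambda>c. [:c:]) ` {c. c^q = c}"
proof safe
  fix L assume L: "L \<in> TT 0"
  have d: "degree L = 0" using TT_deg[OF L] by simp
  have c: "coeff L 0 = (coeff L 0)^q" using TT_D[OF L, of 0] by simp
  have "L = [:coeff L 0:]"
    by (rule poly_eqI) (use d in \<open>auto simp: coeff_pCons coeff_eq_0 split: nat.split\<close>)
  thus "L \<in> (\<lambda>c. [:c:]) ` {c. c^q = c}" using c by (metis (mono_tags) image_eqI mem_Collect_eq)
next
  fix c :: 'a assume "c^q = c"
  thus "[:c:] \<in> TT 0" by (intro TT_I) auto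
qed

lemma TT1: "TT 1 = (\<lambda>a. [:a^q, a:]) ` UNIV"
proof safe
  fix L assume L: "L \<in> TT 1"
  have d: "degree L \<le> 1" using TT_deg[OF L] by simp
  have c: "coeff L 0 = (coeff L 1)^q" using TT_D[OF L, of 0] by simp
  have "L = [:(coeff L 1)^q, coeff L 1:]"
  proof (rule poly_eqI)
    fix n show "coeff L n = coeff [:(coeff L 1)^q, coeff L 1:] n"
      using d c by (cases n) (auto simp: coeff_pCons coeff_eq_0 split: nat.split)
  qed
  thus "L \<in> range (\<lambda>a. [:a^q, a:])" by blast
next
  fix a :: 'a
  show "[:a^q, a:] \<in> TT 1"
  proof (rule TT_I)
    fix j :: nat assume "j \<le> 1"
    hence "j = 0 \<or> j = 1" by auto
    thus "coeff [:a^q, a:] j = (coeff [:a^q, a:] (1-j))^q" using cjcj by auto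
  qed (simp add: degree_pCons_le)
qed

lemma card_TT: "card (TT t) = q^(t+1)"
proof (induction t rule: less_induct)
  case (less t)
  consider "t = 0" | "t = 1" | u where "t = u + 2" by (metis One_nat_def add_2_eq_Suc' not0_implies_Suc)
  thus ?case
  proof cases
    case 1
    have "inj (\<lambda>c::'a. [:c:])" by (auto intro: injI)
    hence "card (TT 0) = card {c::'a. c^q = c}" unfolding TT0 by (meson card_image inj_on_subset subset_UNIV)
    thus ?thesis using 1 fix_card by simp
  next
    case 2
    have "inj (\<lambda>a::'a. [:a^q, a:])" by (auto intro: injI)
    hence "card (TT 1) = card (UNIV :: 'a set)" unfolding TT1 by (simp add: card_image)
    thus ?thesis using 2 cardq by (simp add: power2_eq_square)
  next
    case 3
    have "card (TT t) = card ((UNIV::'a set) \<times> TT u)" unfolding 3 TT_step using card_image[OF gm_inj[of u]] by simp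
    also have "\<dots> = q^2 * q^(u+1)" using less[of u] 3 cardq by (simp add: card_cartesian_product)
    finally show ?thesis using 3 by (simp add: power_add[symmetric])
  qed
qed

definition sv :: "nat \<Rightarrow> int" where
  "sv t = (if t = 0 then int q - 1 else (int q^2 - 1) * int q^(t-1))"

lemma card_SS: "int (card (SS t)) = sv t"
proof -
  consider "t = 0" | "t = 1" | u where "t = u + 2" by (metis One_nat_def add_2_eq_Suc' not0_implies_Suc)
  thus ?thesis
  proof cases
    case 1
    have "SS 0 = (\<lambda>c. [:c:]) ` ({c::'a. c^q = c} - {0})"
      unfolding set_eq_iff S_char TT0 by auto
    moreover have "inj (\<lambda>c::'a. [:c:])" by (auto intro: injI)
    ultimately have "card (SS 0) = card ({c::'a. c^q = c} - {0})"
      by (metis card_image inj_on_subset subset_UNIV)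
    also have "\<dots> = q - 1" using fix_card q_ge2 by (simp add: card_Diff_singleton)
    finally show ?thesis using 1 q_ge2 by (simp add: sv_def of_nat_diff)
  next
    case 2
    have "SS 1 = (\<lambda>a. [:a^q, a:]) ` (UNIV - {0::'a})"
      unfolding set_eq_iff S_char TT1 by auto
    moreover have "inj (\<lambda>a::'a. [:a^q, a:])" by (auto intro: injI)
    ultimately have "card (SS 1) = card (UNIV - {0::'a})"
      by (metis card_image inj_on_subset subset_UNIV)
    also have "\<dots> = q^2 - 1" using cardq by (simp add: card_Diff_singleton)
    finally show ?thesis using 2 q_ge2 by (simp add: sv_def of_nat_diff)
  next
    case 3
    have "inj_on (gm u) ((UNIV - {0::'a}) \<times> TT u)"
      by (rule inj_on_subset[OF gm_inj[of u]]) blast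
    hence "card (SS t) = card ((UNIV - {0::'a}) \<times> TT u)" unfolding 3 SS_step using card_image by blast
    also have "\<dots> = (q^2 - 1) * q^(u+1)" using card_TT[of u] cardq by (simp add: card_cartesian_product card_Diff_singleton)
    finally have "int (card (SS t)) = (int q^2 - 1) * int q^(u+1)" using q_ge2 by (simp add: of_nat_diff)
    thus ?thesis using 3 by (simp add: sv_def)
  qed
qed

lemma finite_TT: "finite (TT t)"
  using card_TT[of t] q_ge2 by (metis card.infinite not_one_le_zero one_le_power Suc_1 Suc_le_lessD le_trans less_imp_le_nat not_less_eq_eq)

lemma finite_SS: "finite (SS t)"
  by (rule finite_subset[OF _ finite_TT[of t]]) (use S_char in blast)

lemma g_exists:
  assumes "z^(q+1) = (1::'a)"
  shows "\<exists>c. c \<noteq> 0 \<and> tilde q [:-c*z, c:] = [:-c*z, c:]"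
proof -
  have "(-z)^(q+1) = 1"
  proof -
    have "(-z)^(q+1) = (-z)^q * (-z)" by simp
    also have "\<dots> = z^q * z" by (simp add: frob_neg)
    also have "\<dots> = 1" using assms by (simp add: mult.commute)
    finally show ?thesis .
  qed
  then obtain c where c: "c \<noteq> 0" "c^(q-1) = -z" using ex_root by blast
  have e: "c^q = c * c^(q-1)" using q_ge2 by (metis Suc_diff_le diff_Suc_1 le_trans one_le_numeral power_Suc)
  have cq: "c^q = -c*z" using e c by simp
  have "(-c*z)^q = - (c^q * z^q)" by (simp add: frob_neg power_mult_distrib)
  also have "\<dots> = c * (z * z^q)" using cq by simp
  also have "\<dots> = c" using assms by simp
  finally have "(-c*z)^q = c" .
  thus ?thesis using c cq tilde_lin[of c "-c*z"] by auto
qed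

definition NN :: "nat \<Rightarrow> 'a set \<Rightarrow> nat" where
  "NN t R = card {L\<in>SS t. \<forall>r\<in>R. poly L r \<noteq> 0}"

lemma NN_0: "NN t {} = card (SS t)"
  by (simp add: NN_def)

lemma NN_step0: "NN 0 (insert z R) = NN 0 R"
proof -
  have "poly L z \<noteq> 0" if "L \<in> SS 0" for L
  proof -
    have "L \<noteq> 0" "degree L = 0" using that by (auto simp: SS_def)
    thus ?thesis by (metis degree_0_id pCons_eq_0_iff poly_pCons poly_0 mult_zero_right add.right_neutral)
  qed
  hence "{L\<in>SS 0. \<forall>r\<in>insert z R. poly L r \<noteq> 0} = {L\<in>SS 0. \<forall>r\<in>R. poly L r \<noteq> 0}" by auto
  thus ?thesis by (simp add: NN_def)
qed

lemma NN_step: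
  assumes z: "z^(q+1) = (1::'a)" and zR: "z \<notin> R"
  shows "int (NN (Suc t) (insert z R)) = int (NN (Suc t) R) - int (NN t R)"
proof -
  obtain c where c: "c \<noteq> 0" and tg: "tilde q [:-c*z, c:] = [:-c*z, c:]" using g_exists[OF z] by blast
  define g where "g = [:-c*z, c:]"
  have g0: "g \<noteq> 0" using c by (simp add: g_def)
  have dg: "degree g = 1" using c by (simp add: g_def)
  have pg: "poly g x = c * (x - z)" for x by (simp add: g_def algebra_simps)
  have tg': "tilde q g = g" using tg by (simp add: g_def)
  define A1 where "A1 = {L\<in>SS (Suc t). \<forall>r\<in>R. poly L r \<noteq> 0}"
  define B where "B = {h\<in>SS t. \<forall>r\<in>R. poly h r \<noteq> 0}"
  have gB: "(\<lambda>h. g * h) ` B = {L\<in>A1. poly L z = 0}"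
  proof safe
    fix h assume "h \<in> B"
    hence h: "h \<noteq> 0" "degree h = t" "tilde q h = h" "\<And>r. r \<in> R \<Longrightarrow> poly h r \<noteq> 0"
      by (auto simp: B_def SS_def)
    have "g * h \<noteq> 0" using g0 h by simp
    moreover have "degree (g*h) = Suc t" using g0 h dg by (simp add: degree_mult_eq)
    moreover have "tilde q (g*h) = g*h" using tilde_mult tg' h by simp
    moreover have "poly (g*h) r \<noteq> 0" if "r \<in> R" for r
      using h(4)[OF that] pg[of r] c zR that by auto
    ultimately show "g * h \<in> A1" by (auto simp: A1_def SS_def)
    show "poly (g*h) z = 0" using pg by simp
  next
    fix L assume L: "L \<in> A1" "poly L z = 0"
    hence L': "L \<noteq> 0" "degree L = Suc t" "tilde q L = L" "\<And>r. r \<in> R \<Longrightarrow> poly L r \<noteq> 0"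
      by (auto simp: A1_def SS_def)
    have "[:-z,1:] dvd L" using L(2) by (simp add: poly_eq_0_iff_dvd)
    moreover have "g = smult c [:-z,1:]" by (simp add: g_def)
    ultimately have "g dvd L" using c by (metis smult_dvd_iff)
    define h where "h = L div g"
    have Lgh: "L = g * h" unfolding h_def using \<open>g dvd L\<close> by simp
    have h0: "h \<noteq> 0" using Lgh L' by auto
    have "degree L = 1 + degree h" using Lgh g0 h0 dg by (simp add: degree_mult_eq)
    hence dh: "degree h = t" using L' by simp
    have "g * tilde q h = g * h" using tilde_mult[of g h] tg' L'(3) Lgh by simp
    hence th: "tilde q h = h" using g0 by simp
    have "poly h r \<noteq> 0" if "r \<in> R" for r using L'(4)[OF that] Lgh by simp
    hence "h \<in> B" using h0 dh th by (auto simp: B_def SS_def)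
    thus "L \<in> (\<lambda>h. g * h) ` B" using Lgh by blast
  qed
  have inj: "inj_on (\<lambda>h. g * h) B" using g0 by (auto intro: inj_onI)
  have fA1: "finite A1" using finite_SS by (simp add: A1_def)
  have eq: "{L\<in>SS (Suc t). \<forall>r\<in>insert z R. poly L r \<noteq> 0} = A1 - {L\<in>A1. poly L z = 0}"
    by (auto simp: A1_def)
  have "NN (Suc t) (insert z R) = card A1 - card {L\<in>A1. poly L z = 0}"
    unfolding NN_def eq by (rule card_Diff_subset) (use fA1 in auto)
  also have cB: "card {L\<in>A1. poly L z = 0} = card B" unfolding gB[symmetric] by (rule card_image[OF inj])
  finally have "NN (Suc t) (insert z R) = card A1 - card B" .
  moreover have "card B \<le> card A1" unfolding cB[symmetric] by (rule card_mono[OF fA1]) auto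
  ultimately show ?thesis by (simp add: NN_def A1_def B_def of_nat_diff)
qed

lemma NN_formula:
  assumes "finite R" "\<And>z. z \<in> R \<Longrightarrow> z^(q+1) = (1::'a)"
  shows "int (NN t R) = FF sv t (card R)"
  using assms
proof (induction R arbitrary: t rule: finite_induct)
  case empty thus ?case by (simp add: NN_0 card_SS FF_0)
next
  case (insert z R)
  have cR: "card (insert z R) = Suc (card R)" using insert.hyps by simp
  show ?case
  proof (cases t)
    case 0
    thus ?thesis using insert NN_step0 cR by (simp add: FF_t0)
  next
    case (Suc u)
    have "int (NN t (insert z R)) = int (NN (Suc u) R) - int (NN u R)"
      unfolding Suc by (rule NN_step) (use insert in auto)
    also have "\<dots> = FF sv (Suc u) (card R) - FF sv u (card R)" using insert by simp
    finally show ?thesis using cR Suc by (simp add: FF_step)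
  qed
qed


end

lemma degXm1:
  assumes "m > 0"
  shows "degree (monom 1 m - 1 :: 'a::field poly) = m"
proof -
  have a: "degree (monom 1 m :: 'a poly) = m" by (simp add: degree_monom_eq)
  have b: "degree (-1 :: 'a poly) = 0" by simp
  have "degree (monom 1 m + (-1) :: 'a poly) = m" using a b assms by (metis degree_add_eq_left)
  thus ?thesis by simp
qed
lemma coprime_char:
  fixes L :: "'a::{finite,field_gcd} poly"
  assumes md: "card {z::'a. z^m = 1} = m" "m > 0"
  shows "coprime L (monom 1 m - 1 :: 'a poly) \<longleftrightarrow> (\<forall>z. z^m = 1 \<longrightarrow> poly L z \<noteq> 0)"
proof -
  define Z where "Z = {z::'a. z^m = 1}"
  define Q where "Q = (monom 1 m - 1 :: 'a poly)"
  define P where "P = (\<Prod>z\<in>Z. [:-z,1:])"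
  have cZ: "card Z = m" unfolding Z_def by (rule md(1))
  have pQ: "poly Q x = x^m - 1" for x unfolding Q_def by (simp add: poly_monom)
  have dQ: "degree Q = m" unfolding Q_def using md(2) by (rule degXm1)
  have Q0: "Q \<noteq> 0" using dQ md by auto
  have "P dvd Q" unfolding P_def by (rule prod_lin_dvd) (auto simp: Z_def pQ)
  then obtain kk where Qk: "Q = P * kk" by (elim dvdE)
  have dP: "degree P = m" unfolding P_def using cZ by (simp add: degree_prod_eq_sum_degree)
  have P0: "P \<noteq> 0" and kk0: "kk \<noteq> 0" using Qk Q0 by auto
  have "degree Q = degree P + degree kk" using Qk P0 kk0 by (simp add: degree_mult_eq)
  hence "degree kk = 0" using dP dQ by simp
  hence ukk: "is_unit kk" using kk0 by (simp add: is_unit_iff_degree)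
  show ?thesis
  proof
    assume cop: "coprime L (monom 1 m - 1 :: 'a poly)"
    show "\<forall>z. z^m = 1 \<longrightarrow> poly L z \<noteq> 0"
    proof (intro allI impI notI)
      fix z :: 'a assume z: "z^m = 1" "poly L z = 0"
      have "[:-z,1:] dvd L" using z by (simp add: poly_eq_0_iff_dvd)
      moreover have "[:-z,1:] dvd Q" using z pQ by (simp add: poly_eq_0_iff_dvd[symmetric])
      ultimately have "is_unit [:-z,1:]" using cop coprime_common_divisor unfolding Q_def by blast
      thus False by (simp add: is_unit_iff_degree)
    qed
  next
    assume nz: "\<forall>z. z^m = 1 \<longrightarrow> poly L z \<noteq> 0"
    have "coprime L P" unfolding P_def
    proof (rule prod_coprime_right)
      fix z assume "z \<in> Z"
      hence "\<not> [:-z,1:] dvd L" using nz by (simp add: Z_def poly_eq_0_iff_dvd[symmetric])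
      hence "coprime [:-z,1:] L" by (intro prime_elem_imp_coprime prime_elem_linear_field_poly) auto
      thus "coprime L [:-z,1:]" by (simp add: coprime_commute)
    qed
    moreover have "coprime L kk" using ukk by (rule is_unit_right_imp_coprime)
    ultimately have "coprime L Q" unfolding Qk by simp
    thus "coprime L (monom 1 m - 1 :: 'a poly)" unfolding Q_def .
  qed
qed


lemma FF_eval:
  "FF s t m = (\<Sum>i<t. (-1)^i * int (m choose i) * s (t - i)) + (-1)^t * int (m choose t) * s 0"
  unfolding FF_def by (simp add: lessThan_Suc_atMost[symmetric])

theorem lemma2p5:
  fixes q d t :: nat
  assumes "\<exists>p k. prime p \<and> k > 0 \<and> q = p ^ k"
    and "card (UNIV :: 'a set) = q ^ 2"
    and "d > 0" and "d dvd q + 1"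
    and "t < (q + 1) div d"
  shows "int (card {L :: 'a::{finite,field_gcd} poly. degree L = t \<and> tilde q L = L
                   \<and> gcd L (monom 1 ((q + 1) div d) - 1) = 1})
    = (int q ^ 2 - 1) * (\<Sum>i<t. (-1) ^ i * int (((q + 1) div d) choose i) * int q ^ (t - i - 1))
      + (-1) ^ t * (int q - 1) * int (((q + 1) div d) choose t)"
proof -
  obtain p k where pk: "prime p" "k > 0" "q = p ^ k" using assms(1) by blast
  have "CHAR('a) dvd p ^ (2*k)" using CHAR_dvd_CARD[where ?'a='a] assms(2) pk(3)
    by (simp add: power_mult[symmetric] mult.commute)
  have pC: "prime CHAR('a)"
    using prime_CHAR_semidom[where ?'a='a] finite_imp_CHAR_pos[where ?'a='a] by simp
  have "CHAR('a) dvd p" using pC prime_dvd_power \<open>CHAR('a) dvd p ^ (2*k)\<close> by blast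
  hence Cp: "CHAR('a) = p" using pC pk(1) primes_dvd_imp_eq by blast
  interpret F: ffq q k "TYPE('a)"
    by unfold_locales (use pk Cp assms(2) in auto)
  define m where "m = (q + 1) div d"
  have md: "m * d = q + 1" unfolding m_def using assms(4) by (rule dvd_div_mult_self)
  have m0: "m > 0" using assms(5) by (simp add: m_def)
  define Z where "Z = {z::'a. z^m = 1}"
  have cZ: "card Z = m" unfolding Z_def by (rule F.mu_card[OF md m0])
  have finZ: "finite Z" by (rule finite_subset[OF subset_UNIV]) simp
  have ZU: "z^(q+1) = 1" if "z \<in> Z" for z
  proof -
    have "z^(q+1) = z^(m*d)" using md by simp
    also have "\<dots> = (z^m)^d" by (rule power_mult)
    also have "\<dots> = 1" using that unfolding Z_def by simp
    finally show ?thesis .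
  qed
  have seteq: "{L :: 'a poly. degree L = t \<and> tilde q L = L \<and> gcd L (monom 1 m - 1) = 1}
     = {L\<in>F.SS t. \<forall>r\<in>Z. poly L r \<noteq> 0}"
  proof (rule Set.set_eqI)
    fix L :: "'a poly"
    have G: "gcd L (monom 1 m - 1) = 1 \<longleftrightarrow> (\<forall>r\<in>Z. poly L r \<noteq> 0)"
    proof -
      have "gcd L (monom 1 m - 1) = 1 \<longleftrightarrow> coprime L (monom 1 m - 1)"
        by (rule coprime_iff_gcd_eq_1[symmetric])
      also have "\<dots> \<longleftrightarrow> (\<forall>z. z^m = 1 \<longrightarrow> poly L z \<noteq> 0)"
        by (rule coprime_char[OF cZ[unfolded Z_def] m0])
      also have "\<dots> \<longleftrightarrow> (\<forall>r\<in>Z. poly L r \<noteq> 0)" unfolding Z_def by blast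
      finally show ?thesis .
    qed
    have nz: "L \<noteq> 0" if "\<forall>r\<in>Z. poly L r \<noteq> 0"
    proof
      assume "L = 0"
      moreover have "(1::'a) \<in> Z" unfolding Z_def by simp
      ultimately show False using that by auto
    qed
    have S: "L \<in> F.SS t \<longleftrightarrow> L \<noteq> 0 \<and> degree L = t \<and> tilde q L = L"
      unfolding F.SS_def by blast
    show "L \<in> {L :: 'a poly. degree L = t \<and> tilde q L = L \<and> gcd L (monom 1 m - 1) = 1}
       \<longleftrightarrow> L \<in> {L\<in>F.SS t. \<forall>r\<in>Z. poly L r \<noteq> 0}"
      unfolding mem_Collect_eq S G using nz by blast
  qed
  have "int (card {L :: 'a poly. degree L = t \<and> tilde q L = L \<and> gcd L (monom 1 m - 1) = 1})
      = int (F.NN t Z)" unfolding seteq F.NN_def ..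
  also have "\<dots> = FF F.sv t m" using F.NN_formula[OF finZ ZU] cZ by simp
  also have "\<dots> = (int q ^ 2 - 1) * (\<Sum>i<t. (-1) ^ i * int (m choose i) * int q ^ (t - i - 1))
      + (-1) ^ t * (int q - 1) * int (m choose t)"
  proof -
    have "(\<Sum>i<t. (-1)^i * int (m choose i) * F.sv (t - i))
        = (\<Sum>i<t. (int q ^ 2 - 1) * ((-1) ^ i * int (m choose i) * int q ^ (t - i - 1)))"
      by (rule sum.cong) (auto simp: F.sv_def)
    thus ?thesis unfolding FF_eval by (simp add: sum_distrib_left[symmetric] F.sv_def)
  qed
  finally show ?thesis by (simp add: m_def)
qed

end
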